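(* Let $S$ be a normal submonoid of $M_{N\times N}(\mathbb{C})$, with inclusion $\iota$, which is the closure of a reductive subgroup $H=L_{\mathbb{C}}$ of $GL(N,\mathbb{C})$, where $L=H\cap U(N)$. Let $\mu_L:S\to\mathfrak{l}^*$ and $\mu:M_{N\times N}(\mathbb{C})\to\mathfrak{u}(N)^*$ be the moment maps for the right actions $\mathcal{R}$ of $L$ on $S$ and of $U(N)$ on $M_{N\times N}(\mathbb{C})$, respectively. Let $\eta:\mu_L(S)\to(\mu\circ\iota)(S)$ be the inverse of the homeomorphism $(d\iota)^*:(\mu\circ\iota)(S)\to\mu_L(S)$. Let $s$ be the section of $\mu$ given by $s(B)=\sqrt{-iB}$, the positive semidefinite square root, for $B$ in the image of $\mu$. Then the composition $s_L:=s\circ\eta$ takes values in $S$, and hence $s_L$ is a section (right inverse) of $\mu_L$.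
   Context: $M_{N\times N}(\mathbb{C})$ carries the Euclidean Kähler form $\omega_E(A,B)=-\operatorname{Im}\operatorname{Tr}(AB^* )$, restricted to $S$. With the identification $\mathfrak{u}(N)\cong\mathfrak{u}(N)^*$ via $\langle A,B\rangle=-\operatorname{Tr}(AB)$ one has $\mu(A)=iA^*A$. The map $(d\iota)^*$ is dual to the inclusion $\mathfrak{l}\hookrightarrow\mathfrak{u}(N)$, and $(d\iota)^*\circ\mu\circ\iota=\mu_L$. *)

theory Defs
  imports "HOL-Analysis.Analysis"
begin

type_synonym 'n cmat = "complex^'n^'n"

definition adj :: "'n::finite cmat \<Rightarrow> 'n cmat" where
  "adj A = (\<chi> i j. cnj (A $ j $ i))"

definition csmul :: "complex \<Rightarrow> 'n::finite cmat \<Rightarrow> 'n cmat" where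
  "csmul c A = (\<chi> i j. c * A $ i $ j)"

primrec mpow :: "'n::finite cmat \<Rightarrow> nat \<Rightarrow> 'n cmat" where
  "mpow A 0 = mat 1"
| "mpow A (Suc k) = A ** mpow A k"

definition mexp :: "'n::finite cmat \<Rightarrow> 'n cmat" where
  "mexp A = (\<Sum>k. (1 / fact k) *\<^sub>R mpow A k)"

definition unitary_group :: "'n::finite cmat set" where
  "unitary_group = {U. adj U ** U = mat 1}"

definition u_alg :: "'n::finite cmat set" where
  "u_alg = {X. adj X = - X}"

definition lie_alg :: "'n::finite cmat set \<Rightarrow> 'n cmat set" where
  "lie_alg L = {X. \<forall>t::real. mexp (t *\<^sub>R X) \<in> L}"

definition complexification :: "'n::finite cmat set \<Rightarrow> 'n cmat set" where
  "complexification L = {k ** mexp (csmul \<i> X) | k X. k \<in> L \<and> X \<in> lie_alg L}"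

definition upair :: "'n::finite cmat \<Rightarrow> 'n cmat \<Rightarrow> real" where
  "upair A B = Re (- trace (A ** B))"

text \<open>Moment map mu(A) = i A^* A of the right U(N)-action, as element of u(N) = u(N)^*.\<close>
definition mu :: "'n::finite cmat \<Rightarrow> 'n cmat" where
  "mu A = csmul \<i> (adj A ** A)"

text \<open>(d iota)^* : u(N)^* -> l^*, dual to the inclusion l -> u(N); an element of l^* is
  represented as a real functional on matrices supported on l.\<close>
definition dstar :: "'n::finite cmat set \<Rightarrow> 'n cmat \<Rightarrow> ('n cmat \<Rightarrow> real)" where
  "dstar L B = (\<lambda>X. if X \<in> lie_alg L then upair B X else 0)"

definition muL :: "'n::finite cmat set \<Rightarrow> 'n cmat \<Rightarrow> ('n cmat \<Rightarrow> real)" where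
  "muL L A = dstar L (mu A)"

definition hermitian :: "'n::finite cmat \<Rightarrow> bool" where
  "hermitian P \<longleftrightarrow> adj P = P"

definition psd :: "'n::finite cmat \<Rightarrow> bool" where
  "psd P \<longleftrightarrow> hermitian P \<and> (\<forall>x::complex^'n. 0 \<le> Re (\<Sum>i\<in>UNIV. cnj (x $ i) * (P *v x) $ i))"

definition msqrt :: "'n::finite cmat \<Rightarrow> 'n cmat" where
  "msqrt M = (THE P. psd P \<and> P ** P = M)"

definition sec :: "'n::finite cmat \<Rightarrow> 'n cmat" where
  "sec B = msqrt (csmul (- \<i>) B)"

inductive_set polyfun :: "('n::finite cmat \<Rightarrow> complex) set" where
  const: "(\<lambda>A. c) \<in> polyfun"
| coord: "(\<lambda>A. A $ i $ j) \<in> polyfun"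
| add: "f \<in> polyfun \<Longrightarrow> g \<in> polyfun \<Longrightarrow> (\<lambda>A. f A + g A) \<in> polyfun"
| mult: "f \<in> polyfun \<Longrightarrow> g \<in> polyfun \<Longrightarrow> (\<lambda>A. f A * g A) \<in> polyfun"

text \<open>Normality of the affine variety S: its coordinate ring C[S] (polynomial functions
  restricted to S; reduced) is integrally closed in its total ring of fractions.\<close>
definition nonzerodiv_on :: "'n::finite cmat set \<Rightarrow> ('n cmat \<Rightarrow> complex) \<Rightarrow> bool" where
  "nonzerodiv_on S g \<longleftrightarrow>
     (\<forall>h\<in>polyfun. (\<forall>A\<in>S. h A * g A = 0) \<longrightarrow> (\<forall>A\<in>S. h A = 0))"

definition normal_variety :: "'n::finite cmat set \<Rightarrow> bool" where
  "normal_variety S \<longleftrightarrow>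
     (\<forall>f\<in>polyfun. \<forall>g\<in>polyfun. nonzerodiv_on S g \<longrightarrow>
        (\<exists>n>0. \<exists>a::nat \<Rightarrow> ('n cmat \<Rightarrow> complex). (\<forall>k<n. a k \<in> polyfun) \<and>
            (\<forall>A\<in>S. f A ^ n + (\<Sum>k<n. a k A * f A ^ k * g A ^ (n - k)) = 0))
        \<longrightarrow> (\<exists>h\<in>polyfun. \<forall>A\<in>S. f A = h A * g A))"

end

theory Submission
  imports Defs
begin


definition ip :: "complex^'n::finite \<Rightarrow> complex^'n \<Rightarrow> complex" where
  "ip x y = (\<Sum>i\<in>UNIV. cnj (x $ i) * y $ i)"

lemma adj_nth[simp]: "adj A $ i $ j = cnj (A $ j $ i)"
  by (simp add: adj_def)

lemma adj_adj[simp]: "adj (adj A) = A"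
  by (simp add: vec_eq_iff)

lemma adj_mult: "adj (A ** B) = adj B ** adj (A::'n::finite cmat)"
  by (simp add: vec_eq_iff matrix_matrix_mult_def mult.commute)

lemma adj_mat1[simp]: "adj (mat 1 :: 'n::finite cmat) = mat 1"
  by (simp add: vec_eq_iff mat_def)

lemma adj_add: "adj (A + B) = adj A + adj (B::'n::finite cmat)"
  by (simp add: vec_eq_iff)

lemma adj_diff: "adj (A - B) = adj A - adj (B::'n::finite cmat)"
  by (simp add: vec_eq_iff)

lemma adj_uminus: "adj (- A) = - adj (A::'n::finite cmat)"
  by (simp add: vec_eq_iff)

lemma adj_scaleR: "adj (c *\<^sub>R A) = c *\<^sub>R adj (A::'n::finite cmat)"
  by (simp add: vec_eq_iff)

lemma adj_csmul: "adj (csmul c A) = csmul (cnj c) (adj (A::'n::finite cmat))"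
  by (simp add: vec_eq_iff csmul_def)

lemma ip_adj: "ip x (M *v y) = ip (adj M *v x) (y::complex^'n::finite)"
proof -
  have "ip x (M *v y) = (\<Sum>i\<in>UNIV. \<Sum>j\<in>UNIV. cnj (x $ i) * (M $ i $ j * y $ j))"
    unfolding ip_def matrix_vector_mult_def by (simp add: sum_distrib_left)
  also have "\<dots> = (\<Sum>j\<in>UNIV. \<Sum>i\<in>UNIV. cnj (x $ i) * (M $ i $ j * y $ j))"
    by (rule sum.swap)
  also have "\<dots> = ip (adj M *v x) y"
    unfolding ip_def matrix_vector_mult_def by (simp add: sum_distrib_left sum_distrib_right mult_ac)
  finally show ?thesis .
qed

lemma ip_self: "ip x x = of_real (\<Sum>i\<in>UNIV. (cmod (x $ i))^2)"
  unfolding ip_def of_real_sum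
  by (rule sum.cong) (auto simp: complex_norm_square[symmetric] mult.commute)

lemma ip_self_ge: "0 \<le> Re (ip x x)"
  by (simp add: ip_self sum_nonneg)

lemma ip_self_zero: "ip x x = 0 \<Longrightarrow> x = (0::complex^'n::finite)"
proof -
  assume "ip x x = 0"
  hence "(\<Sum>i\<in>UNIV. (cmod (x $ i))^2) = 0" unfolding ip_self by (metis of_real_eq_0_iff)
  hence "\<forall>i\<in>UNIV. (cmod (x $ i))^2 = 0" by (subst (asm) sum_nonneg_eq_0_iff) auto
  thus ?thesis by (simp add: vec_eq_iff)
qed

lemma psd_iff: "psd P \<longleftrightarrow> adj P = P \<and> (\<forall>x. 0 \<le> Re (ip x (P *v x)))"
  unfolding psd_def hermitian_def ip_def ..

lemma ip_add_left: "ip (x + y) w = ip x w + ip y w"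
  unfolding ip_def by (simp add: sum.distrib distrib_right)
lemma ip_add_right: "ip w (x + y) = ip w x + ip w y"
  unfolding ip_def by (simp add: sum.distrib distrib_left)
lemma ip_smult_left: "ip (c *s x) w = cnj c * ip x w"
  unfolding ip_def by (simp add: sum_distrib_left mult.assoc)
lemma ip_smult_right: "ip w (c *s x) = c * ip w x"
  unfolding ip_def sum_distrib_left by (rule sum.cong) auto
lemma mv_smult: "(A::'n::finite cmat) *v (c *s x) = c *s (A *v x)"
  unfolding vec_eq_iff matrix_vector_mult_def by (simp add: sum_distrib_left mult.left_commute)

lemma ip_self_real: "ip x x = of_real (Re (ip x x))"
  by (simp add: ip_self)

lemma psd_kernel:
  assumes "psd P" "Re (ip y (P *v y)) = 0"
  shows "P *v y = 0"
proof -
  define z where "z = P *v y"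
  have herm: "adj P = P" and pos: "\<And>x. 0 \<le> Re (ip x (P *v x))" using assms(1) by (auto simp: psd_iff)
  define s where "s = Re (ip z z)"
  define c where "c = Re (ip z (P *v z))"
  have c0: "0 \<le> c" using pos c_def by simp
  have s0: "0 \<le> s" using ip_self_ge s_def by simp
  have e1: "ip y (P *v z) = ip z z" using ip_adj[of y P z] herm z_def by simp
  have e2: "ip z (P *v y) = ip z z" using z_def by simp
  have key: "0 \<le> 2 * t * s + t^2 * c" for t :: real
  proof -
    have "0 \<le> Re (ip (y + (of_real t) *s z) (P *v (y + (of_real t) *s z)))" by (rule pos)
    moreover have "ip (y + (of_real t) *s z) (P *v (y + (of_real t) *s z)) =
       ip y (P *v y) + of_real t * ip y (P *v z) + of_real t * ip z (P *v y) + (of_real t)^2 * ip z (P *v z)"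
      unfolding matrix_vector_right_distrib mv_smult ip_add_left ip_add_right ip_smult_left ip_smult_right
      by (simp add: power2_eq_square distrib_left)
    moreover have "Re (ip y (P *v y) + of_real t * ip y (P *v z) + of_real t * ip z (P *v y) + (of_real t)^2 * ip z (P *v z)) = 2 * t * s + t^2 * c"
      using assms(2) by (simp add: e1 e2 s_def c_def power2_eq_square)
    ultimately show ?thesis by simp
  qed
  have "s = 0"
  proof (rule ccontr)
    assume "s \<noteq> 0"
    hence sp: "s > 0" using s0 by simp
    define t where "t = - s / (c + 1)"
    have st: "s = - t * (c + 1)" using c0 by (simp add: t_def)
    have tn: "t \<noteq> 0" using sp st by auto
    have "0 \<le> 2 * t * s + t^2 * c" by (rule key)
    also have "2 * t * s + t^2 * c = - (t^2) * (c + 2)"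
      by (simp add: st power2_eq_square algebra_simps)
    also have "\<dots> < 0" using tn c0 by (simp add: mult_pos_pos)
    finally show False by simp
  qed
  hence "ip z z = 0" using ip_self_real[of z] s_def by (metis of_real_0)
  thus ?thesis using ip_self_zero z_def by blast
qed



lemma mm_diff_left: "((A::'n::finite cmat) - B) ** C = A ** C - B ** C"
  by (simp add: vec_eq_iff matrix_matrix_mult_def sum_subtractf left_diff_distrib)
lemma mm_diff_right: "(A::'n::finite cmat) ** (B - C) = A ** B - A ** C"
  by (simp add: vec_eq_iff matrix_matrix_mult_def sum_subtractf right_diff_distrib)
lemma mm_add_left: "((A::'n::finite cmat) + B) ** C = A ** C + B ** C"
  by (simp add: vec_eq_iff matrix_matrix_mult_def sum.distrib distrib_right)

lemma ip_axis: "ip (axis j 1) w = w $ j"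
proof -
  have e: "cnj (axis j 1 $ i) * w $ i = (if i = j then w $ i else 0)" for i
    by (simp add: axis_def)
  show ?thesis unfolding ip_def e by simp
qed

lemma mv_axis: "((M::'n::finite cmat) *v axis j 1) $ i = M $ i $ j"
  unfolding matrix_vector_mult_def axis_def by (simp add: if_distrib cong: if_cong)

lemma mat_eq_zero_cols: "(\<And>j. (M::'n::finite cmat) *v axis j 1 = 0) \<Longrightarrow> M = 0"
proof -
  assume h: "\<And>j. M *v axis j 1 = 0"
  have "M $ i $ j = 0" for i j
    using mv_axis[of M j i] h[of j] by simp
  thus ?thesis by (simp add: vec_eq_iff)
qed

lemma ip_diag: "ip ((D::'n::finite cmat) *v axis j 1) (M *v (D *v axis j 1)) = (adj D ** M ** D) $ j $ j"
proof -
  have "ip (D *v axis j 1) (M *v (D *v axis j 1)) = ip (axis j 1) (adj D *v (M *v (D *v axis j 1)))"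
    using ip_adj[of "axis j 1" "adj D" "M *v (D *v axis j 1)"] by simp
  also have "\<dots> = ((adj D ** M ** D) *v axis j 1) $ j"
    by (simp add: ip_axis matrix_vector_mul_assoc matrix_mul_assoc)
  also have "\<dots> = (adj D ** M ** D) $ j $ j" by (rule mv_axis)
  finally show ?thesis .
qed
lemma psd_sqrt_unique:
  assumes P: "psd P" and Q: "psd Q" and PQ: "P ** P = Q ** (Q::'n::finite cmat)"
  shows "P = Q"
proof -
  define D where "D = P - Q"
  have hP: "adj P = P" and hQ: "adj Q = Q" using P Q by (auto simp: psd_iff)
  have hD: "adj D = D" using hP hQ by (simp add: D_def adj_diff)
  have z: "P ** D + D ** Q = 0"
    by (simp add: D_def mm_diff_left mm_diff_right PQ matrix_mul_assoc)
  define f where "f j = Re (ip (D *v axis j 1) (P *v (D *v axis j 1)))" for j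
  define g where "g j = Re (ip (D *v axis j 1) (Q *v (D *v axis j 1)))" for j
  have f0: "0 \<le> f j" for j using P by (auto simp: psd_iff f_def)
  have g0: "0 \<le> g j" for j using Q by (auto simp: psd_iff g_def)
  have "(\<Sum>j\<in>UNIV. f j + g j) = Re (trace (D ** P ** D) + trace (D ** Q ** D))"
    by (simp add: f_def g_def ip_diag hD trace_def sum.distrib)
  also have "trace (D ** Q ** D) = trace (D ** (D ** Q))"
    using trace_mul_sym[of "D ** Q" D] by (simp add: matrix_mul_assoc)
  also have "trace (D ** P ** D) + trace (D ** (D ** Q)) = trace (D ** (P ** D + D ** Q))"
    by (simp add: matrix_add_ldistrib trace_add matrix_mul_assoc)
  also have "\<dots> = 0" by (simp add: z trace_def)
  finally have s0: "(\<Sum>j\<in>UNIV. f j + g j) = 0" by simp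
  have fg: "f j + g j = 0" for j
    using s0 f0 g0 by (subst (asm) sum_nonneg_eq_0_iff) (auto simp: add_nonneg_nonneg)
  have PD: "P ** D = 0"
  proof (rule mat_eq_zero_cols)
    fix j
    have "f j = 0" using fg[of j] f0[of j] g0[of j] by simp
    hence "P *v (D *v axis j 1) = 0" using psd_kernel[OF P] f_def by simp
    thus "(P ** D) *v axis j 1 = 0" by (simp add: matrix_vector_mul_assoc)
  qed
  have QD: "Q ** D = 0"
  proof (rule mat_eq_zero_cols)
    fix j
    have "g j = 0" using fg[of j] f0[of j] g0[of j] by simp
    hence "Q *v (D *v axis j 1) = 0" using psd_kernel[OF Q] g_def by simp
    thus "(Q ** D) *v axis j 1 = 0" by (simp add: matrix_vector_mul_assoc)
  qed
  have "(P - Q) ** D = P ** D - Q ** D" by (rule mm_diff_left)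
  hence DD: "D ** D = 0" using PD QD unfolding D_def[symmetric] by simp
  have "D = 0"
  proof (rule mat_eq_zero_cols)
    fix j
    have "ip (D *v axis j 1) (D *v axis j 1) = ip ((D ** D) *v axis j 1) (axis j 1)"
      using ip_adj[of "D *v axis j 1" D "axis j 1"] hD by (simp add: matrix_vector_mul_assoc)
    also have "\<dots> = 0" using DD by (simp add: ip_def)
    finally show "D *v axis j 1 = 0" by (rule ip_self_zero)
  qed
  thus ?thesis by (simp add: D_def)
qed




definition rn :: "'n::finite cmat \<Rightarrow> real" where
  "rn M = Max (range (\<lambda>i. \<Sum>j\<in>UNIV. norm (M $ i $ j)))"

lemma rn_ge: "(\<Sum>j\<in>UNIV. norm (M $ i $ j)) \<le> rn M"
  unfolding rn_def by (rule Max_ge) auto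

lemma rn_le: "(\<And>i. (\<Sum>j\<in>UNIV. norm ((M::'n::finite cmat) $ i $ j)) \<le> c) \<Longrightarrow> rn M \<le> c"
  unfolding rn_def by (subst Max_le_iff) auto

lemma rn_attained: "\<exists>i. rn M = (\<Sum>j\<in>UNIV. norm ((M::'n::finite cmat) $ i $ j))"
proof -
  have "rn M \<in> range (\<lambda>i. \<Sum>j\<in>UNIV. norm (M $ i $ j))"
    unfolding rn_def by (rule Max_in) auto
  thus ?thesis by auto
qed

lemma entry_le_rn: "norm ((M::'n::finite cmat) $ i $ j) \<le> rn M"
proof -
  have "norm (M $ i $ j) \<le> (\<Sum>j\<in>UNIV. norm (M $ i $ j))"
    by (rule member_le_sum) auto
  also have "\<dots> \<le> rn M" by (rule rn_ge)
  finally show ?thesis .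
qed

lemma rn_nonneg: "0 \<le> rn (M::'n::finite cmat)"
  using entry_le_rn[of M] norm_ge_zero order_trans by blast

lemma rn_zero_iff: "rn (M::'n::finite cmat) = 0 \<longleftrightarrow> M = 0"
proof
  assume "rn M = 0"
  hence "norm (M $ i $ j) = 0" for i j using entry_le_rn[of M i j] norm_ge_zero[of "M $ i $ j"] by linarith
  thus "M = 0" by (simp add: vec_eq_iff)
next
  assume "M = 0"
  thus "rn M = 0" unfolding rn_def by simp
qed

lemma rn_triangle: "rn ((A::'n::finite cmat) + B) \<le> rn A + rn B"
proof (rule rn_le)
  fix i
  have "(\<Sum>j\<in>UNIV. norm ((A + B) $ i $ j)) \<le> (\<Sum>j\<in>UNIV. norm (A $ i $ j) + norm (B $ i $ j))"
    by (rule sum_mono) (simp add: norm_triangle_ineq)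
  also have "\<dots> \<le> rn A + rn B" by (simp add: sum.distrib add_mono rn_ge)
  finally show "(\<Sum>j\<in>UNIV. norm ((A + B) $ i $ j)) \<le> rn A + rn B" .
qed

lemma rn_scaleR: "rn (c *\<^sub>R (A::'n::finite cmat)) = \<bar>c\<bar> * rn A"
proof -
  have "rn (c *\<^sub>R A) = Max (range (\<lambda>i. \<bar>c\<bar> * (\<Sum>j\<in>UNIV. norm (A $ i $ j))))"
    unfolding rn_def by (simp add: sum_distrib_left)
  also have "\<dots> = \<bar>c\<bar> * rn A"
    unfolding rn_def
    by (subst mono_Max_commute[where f="\<lambda>x. \<bar>c\<bar> * x"]) (auto simp: mono_def mult_left_mono image_image)
  finally show ?thesis .
qed

lemma rn_mult: "rn ((A::'n::finite cmat) ** B) \<le> rn A * rn B"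
proof (rule rn_le)
  fix i
  have "(\<Sum>j\<in>UNIV. norm ((A ** B) $ i $ j)) \<le> (\<Sum>j\<in>UNIV. \<Sum>k\<in>UNIV. norm (A $ i $ k) * norm (B $ k $ j))"
    unfolding matrix_matrix_mult_def
    by (rule sum_mono) (simp, rule order_trans[OF norm_sum], simp add: norm_mult)
  also have "\<dots> = (\<Sum>k\<in>UNIV. norm (A $ i $ k) * (\<Sum>j\<in>UNIV. norm (B $ k $ j)))"
    by (subst sum.swap) (simp add: sum_distrib_left)
  also have "\<dots> \<le> (\<Sum>k\<in>UNIV. norm (A $ i $ k) * rn B)"
    by (rule sum_mono) (simp add: mult_left_mono rn_ge)
  also have "\<dots> \<le> rn A * rn B"
    by (simp add: sum_distrib_right[symmetric] mult_right_mono rn_ge rn_nonneg)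
  finally show "(\<Sum>j\<in>UNIV. norm ((A ** B) $ i $ j)) \<le> rn A * rn B" .
qed

lemma rn_one: "rn (mat 1 :: 'n::finite cmat) = 1"
proof -
  have "(\<Sum>j\<in>UNIV. norm ((mat 1 :: 'n cmat) $ i $ j)) = 1" for i
  proof -
    have "(\<Sum>j\<in>UNIV. norm ((mat 1 :: 'n cmat) $ i $ j)) = (\<Sum>j\<in>UNIV. if j = i then 1 else 0)"
      by (rule sum.cong) (auto simp: mat_def)
    thus ?thesis by simp
  qed
  thus ?thesis unfolding rn_def by simp
qed

lemma frob_le_rn: "norm (M::'n::finite cmat) \<le> real CARD('n) * rn M"
proof -
  have "norm M \<le> (\<Sum>i\<in>UNIV. norm (M $ i))"
    unfolding norm_vec_def by (rule L2_set_le_sum) auto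
  also have "\<dots> \<le> (\<Sum>i\<in>UNIV. \<Sum>j\<in>UNIV. norm (M $ i $ j))"
    by (rule sum_mono) (simp add: norm_vec_def L2_set_le_sum)
  also have "\<dots> \<le> (\<Sum>i\<in>(UNIV::'n set). rn M)"
    by (rule sum_mono) (rule rn_ge)
  finally show ?thesis by simp
qed

lemma rn_le_frob: "rn (M::'n::finite cmat) \<le> real CARD('n) * norm M"
proof (rule rn_le)
  fix i
  have "(\<Sum>j\<in>UNIV. norm (M $ i $ j)) \<le> (\<Sum>j\<in>(UNIV::'n set). norm M)"
    by (rule sum_mono) (metis Finite_Cartesian_Product.norm_nth_le order_trans)
  thus "(\<Sum>j\<in>UNIV. norm (M $ i $ j)) \<le> real CARD('n) * norm M" by simp
qed




typedef (overloaded) 'n op = "UNIV :: ('n::finite) cmat set" morphisms rep Abs by simp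

lemmas Abs_inv[simp] = Abs_inverse[OF UNIV_I]
lemmas rep_inv[simp] = rep_inverse
lemma op_eq_iff: "x = y \<longleftrightarrow> rep x = rep y" by (simp add: rep_inject)

instantiation op :: (finite) ab_group_add
begin
definition zero_op_def: "0 = Abs 0"
definition plus_op_def: "x + y = Abs (rep x + rep y)"
definition minus_op_def: "x - y = Abs (rep x - rep y)"
definition uminus_op_def: "- x = Abs (- rep x)"
instance
  by standard (simp_all add: op_eq_iff zero_op_def plus_op_def minus_op_def uminus_op_def algebra_simps)
end

lemma rep_zero[simp]: "rep 0 = 0" by (simp add: zero_op_def)
lemma rep_plus[simp]: "rep (x + y) = rep x + rep y" by (simp add: plus_op_def)
lemma rep_minus[simp]: "rep (x - y) = rep x - rep y" by (simp add: minus_op_def)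
lemma rep_uminus[simp]: "rep (- x) = - rep x" by (simp add: uminus_op_def)

instantiation op :: (finite) real_vector
begin
definition scaleR_op_def: "scaleR c x = Abs (c *\<^sub>R rep x)"
instance
  by standard (simp_all add: op_eq_iff scaleR_op_def algebra_simps)
end

lemma rep_scaleR[simp]: "rep (c *\<^sub>R x) = c *\<^sub>R rep x" by (simp add: scaleR_op_def)

instantiation op :: (finite) ring_1
begin
definition times_op_def: "x * y = Abs (rep x ** rep y)"
definition one_op_def: "1 = Abs (mat 1)"
instance
proof
  fix a b c :: "'a op"
  show "a * b * c = a * (b * c)" by (simp add: op_eq_iff times_op_def matrix_mul_assoc)
  show "1 * a = a" by (simp add: op_eq_iff times_op_def one_op_def)
  show "a * 1 = a" by (simp add: op_eq_iff times_op_def one_op_def)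
  show "(a + b) * c = a * c + b * c" by (simp add: op_eq_iff times_op_def mm_add_left)
  show "a * (b + c) = a * b + a * c" by (simp add: op_eq_iff times_op_def matrix_add_ldistrib)
  show "(0::'a op) \<noteq> 1"
  proof
    assume "(0::'a op) = 1"
    hence "(0::'a cmat) = mat 1" by (simp add: op_eq_iff one_op_def)
    moreover have "(mat 1 :: 'a cmat) $ i $ i = 1" for i by (simp add: mat_def)
    ultimately show False by (metis zero_index zero_neq_one)
  qed
qed
end

lemma rep_times[simp]: "rep (x * y) = rep x ** rep y" by (simp add: times_op_def)
lemma rep_one[simp]: "rep 1 = mat 1" by (simp add: one_op_def)

lemma mm_scaleR_left: "(c *\<^sub>R (A::'n::finite cmat)) ** B = c *\<^sub>R (A ** B)"
  by (rule scalar_matrix_assoc[symmetric])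
lemma mm_scaleR_right: "(A::'n::finite cmat) ** (c *\<^sub>R B) = c *\<^sub>R (A ** B)"
  by (simp add: matrix_scalar_ac scalar_matrix_assoc)

instantiation op :: (finite) real_normed_algebra_1
begin
definition norm_op_def: "norm x = rn (rep x)"
definition sgn_op_def: "sgn (x::'a op) = x /\<^sub>R norm x"
definition dist_op_def: "dist (x::'a op) y = norm (x - y)"
definition uniformity_op_def: "uniformity = (INF e\<in>{0 <..}. principal {(x::'a op, y). dist x y < e})"
definition open_op_def: "open (U::'a op set) \<longleftrightarrow> (\<forall>x\<in>U. eventually (\<lambda>(x', y). x' = x \<longrightarrow> y \<in> U) uniformity)"
instance
proof
  fix x y :: "'a op" and a :: real and U :: "'a op set"
  show "a *\<^sub>R x * y = a *\<^sub>R (x * y)" by (simp add: op_eq_iff mm_scaleR_left)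
  show "x * a *\<^sub>R y = a *\<^sub>R (x * y)" by (simp add: op_eq_iff mm_scaleR_right)
  show "sgn x = x /\<^sub>R norm x" by (rule sgn_op_def)
  show "dist x y = norm (x - y)" by (rule dist_op_def)
  show "uniformity = (INF e\<in>{0 <..}. principal {(x::'a op, y). dist x y < e})" by (rule uniformity_op_def)
  show "open U \<longleftrightarrow> (\<forall>x\<in>U. eventually (\<lambda>(x', y). x' = x \<longrightarrow> y \<in> U) uniformity)" by (rule open_op_def)
  show "norm x = 0 \<longleftrightarrow> x = 0" by (simp add: norm_op_def rn_zero_iff op_eq_iff)
  show "norm (x + y) \<le> norm x + norm y" by (simp add: norm_op_def rn_triangle)
  show "norm (a *\<^sub>R x) = \<bar>a\<bar> * norm x" by (simp add: norm_op_def rn_scaleR)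
  show "norm (x * y) \<le> norm x * norm y" by (simp add: norm_op_def rn_mult)
  show "norm (1::'a op) = 1" by (simp add: norm_op_def rn_one)
qed
end

lemma bl_rep: "bounded_linear (rep :: 'n::finite op \<Rightarrow> 'n cmat)"
proof (rule bounded_linear_intro[where K="real CARD('n)"])
  fix x y :: "'n op" and r :: real
  show "rep (x + y) = rep x + rep y" by simp
  show "rep (r *\<^sub>R x) = r *\<^sub>R rep x" by simp
  show "norm (rep x) \<le> norm x * real CARD('n)"
    using frob_le_rn[of "rep x"] by (simp add: norm_op_def mult.commute)
qed

lemma norm_Abs_le: "norm (Abs M :: 'n::finite op) \<le> real CARD('n) * norm M"
  by (simp add: norm_op_def rn_le_frob)

instance op :: (finite) banach
proof
  fix X :: "nat \<Rightarrow> 'a op"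
  assume "Cauchy X"
  hence "Cauchy (\<lambda>n. rep (X n))" by (rule bounded_linear.Cauchy[OF bl_rep])
  then obtain L where L: "(\<lambda>n. rep (X n)) \<longlonglongrightarrow> L" using Cauchy_convergent_iff convergent_def by blast
  have "X \<longlonglongrightarrow> Abs L"
  proof (rule tendsto_iff[THEN iffD2], intro allI impI)
    fix e :: real assume e: "e > 0"
    define e' where "e' = e / (real CARD('a) + 1)"
    have e': "e' > 0" using e by (simp add: e'_def)
    have "\<forall>\<^sub>F n in sequentially. dist (rep (X n)) L < e'" using tendsto_iff[THEN iffD1, OF L, rule_format, OF e'] .
    thus "\<forall>\<^sub>F n in sequentially. dist (X n) (Abs L) < e"
    proof (rule eventually_mono)
      fix n assume n: "dist (rep (X n)) L < e'"
      have "dist (X n) (Abs L) = norm (Abs (rep (X n) - L) :: 'a op)"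
        by (simp add: dist_norm minus_op_def)
      also have "\<dots> \<le> real CARD('a) * norm (rep (X n) - L)" by (rule norm_Abs_le)
      also have "\<dots> \<le> real CARD('a) * e'" using n by (simp add: dist_norm mult_left_mono)
      also have "\<dots> < e"
        using e by (simp add: e'_def field_simps)
      finally show "dist (X n) (Abs L) < e" .
    qed
  qed
  thus "convergent X" by (auto simp: convergent_def)
qed




lemma rep_pow: "rep (x ^ k) = mpow (rep x) k"
  by (induction k) simp_all

lemma Abs_plus: "Abs (A + B) = Abs A + (Abs B :: 'n::finite op)"
  by (simp add: op_eq_iff)
lemma Abs_scaleR: "Abs (c *\<^sub>R A) = c *\<^sub>R (Abs A :: 'n::finite op)"
  by (simp add: op_eq_iff)
lemma Abs_uminus: "Abs (- A) = - (Abs A :: 'n::finite op)"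
  by (simp add: op_eq_iff)

lemma mexp_series: "(\<lambda>k. (1 / fact k) *\<^sub>R mpow (A::'n::finite cmat) k) sums rep (exp (Abs A :: 'n op))"
proof -
  have "(\<lambda>k. (Abs A :: 'n op) ^ k /\<^sub>R fact k) sums exp (Abs A)"
    unfolding exp_def by (rule summable_sums[OF summable_exp_generic])
  from bounded_linear.sums[OF bl_rep this]
  show ?thesis by (simp add: rep_pow divide_inverse_commute)
qed

lemma mexp_rep: "mexp (A::'n::finite cmat) = rep (exp (Abs A :: 'n op))"
  unfolding mexp_def using mexp_series sums_unique by metis

lemma mexp_add_same: "mexp (A::'n::finite cmat) ** mexp A = mexp (A + A)"
proof -
  have "exp (Abs A + Abs A :: 'n op) = exp (Abs A) * exp (Abs A)" by (rule exp_add_commuting) simp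
  thus ?thesis unfolding mexp_rep Abs_plus by (metis rep_times)
qed

lemma linear_adj: "linear (adj :: 'n::finite cmat \<Rightarrow> 'n cmat)"
  by (rule linearI) (simp_all add: adj_add adj_scaleR)

lemma bl_adj: "bounded_linear (adj :: 'n::finite cmat \<Rightarrow> 'n cmat)"
  using linear_adj linear_conv_bounded_linear by blast

lemma mpow_commute: "mpow A k ** A = A ** mpow (A::'n::finite cmat) k"
  by (induction k) (simp_all add: matrix_mul_assoc[symmetric])

lemma adj_mpow: "adj (mpow A k) = mpow (adj (A::'n::finite cmat)) k"
  by (induction k) (simp_all add: adj_mult mpow_commute)

lemma adj_mexp: "adj (mexp (A::'n::finite cmat)) = mexp (adj A)"
proof -
  from bounded_linear.sums[OF bl_adj mexp_series[of A]]
  have "(\<lambda>k. (1 / fact k) *\<^sub>R mpow (adj A) k) sums adj (rep (exp (Abs A :: 'n op)))"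
    by (simp add: adj_scaleR adj_mpow)
  hence "adj (rep (exp (Abs A :: 'n op))) = mexp (adj A)"
    unfolding mexp_def by (rule sums_unique)
  thus ?thesis by (simp add: mexp_rep)
qed

lemma lie_alg_skew:
  assumes "L \<subseteq> unitary_group" "X \<in> lie_alg L"
  shows "adj X = - (X::'n::finite cmat)"
proof -
  define a :: "'n op" where "a = Abs X"
  define b :: "'n op" where "b = Abs (adj X)"
  have u: "exp (t *\<^sub>R b) * exp (t *\<^sub>R a) = 1" for t
  proof -
    have "mexp (t *\<^sub>R X) \<in> unitary_group" using assms unfolding lie_alg_def by blast
    hence "adj (mexp (t *\<^sub>R X)) ** mexp (t *\<^sub>R X) = mat 1" by (simp add: unitary_group_def)
    hence "mexp (t *\<^sub>R adj X) ** mexp (t *\<^sub>R X) = mat 1" by (simp add: adj_mexp adj_scaleR)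
    thus ?thesis by (simp add: mexp_rep op_eq_iff a_def b_def Abs_scaleR)
  qed
  have e: "exp (t *\<^sub>R b) = exp (t *\<^sub>R (- a))" for t
  proof -
    have "exp (t *\<^sub>R b) = exp (t *\<^sub>R b) * (exp (t *\<^sub>R a) * exp (- (t *\<^sub>R a)))"
      by (simp add: exp_minus_inverse)
    also have "\<dots> = exp (- (t *\<^sub>R a))" by (simp add: mult.assoc[symmetric] u)
    finally show ?thesis by simp
  qed
  have d1: "((\<lambda>t. exp (t *\<^sub>R b)) has_vector_derivative b) (at 0)"
    using exp_scaleR_has_vector_derivative_right[of b 0 UNIV] by simp
  have d2: "((\<lambda>t. exp (t *\<^sub>R b)) has_vector_derivative (- a)) (at 0)"
    unfolding e using exp_scaleR_has_vector_derivative_right[of "- a" 0 UNIV] by simp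
  have "b = - a" using vector_derivative_unique_at[OF d1 d2] .
  hence "rep b = rep (- a)" by simp
  thus ?thesis by (simp add: a_def b_def)
qed




lemma csmul_i_herm: "adj X = - X \<Longrightarrow> adj (csmul \<i> X) = csmul \<i> (X::'n::finite cmat)"
proof -
  assume h: "adj X = - X"
  have e: "cnj (X $ j $ i) = - (X $ i $ j)" for i j
    using arg_cong[OF h, of "\<lambda>M. M $ i $ j"] by simp
  show ?thesis by (simp add: vec_eq_iff csmul_def e)
qed

lemma herm_square_psd:
  assumes "adj F = F"
  shows "psd (F ** (F::'n::finite cmat))"
proof -
  have "adj (F ** F) = F ** F" by (simp add: adj_mult assms)
  moreover have "0 \<le> Re (ip x ((F ** F) *v x))" for x
  proof -
    have "ip x ((F ** F) *v x) = ip (F *v x) (F *v x)"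
      using ip_adj[of x F "F *v x"] assms by (simp add: matrix_vector_mul_assoc)
    thus ?thesis by (simp add: ip_self_ge)
  qed
  ultimately show ?thesis by (simp add: psd_iff)
qed

lemma H_sqrt:
  assumes Lu: "L \<subseteq> unitary_group" and L1: "mat 1 \<in> L" and A: "A \<in> complexification L"
  shows "\<exists>P\<in>complexification L. psd P \<and> P ** P = adj A ** (A::'n::finite cmat)"
proof -
  obtain k X where A_eq: "A = k ** mexp (csmul \<i> X)" and k: "k \<in> L" and X: "X \<in> lie_alg L"
    using A unfolding complexification_def by blast
  define M where "M = csmul \<i> X"
  define P where "P = mexp M"
  have sk: "adj X = - X" using lie_alg_skew[OF Lu X] .
  have hM: "adj M = M" unfolding M_def using csmul_i_herm[OF sk] .
  have hP: "adj P = P" by (simp add: P_def adj_mexp hM)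
  have ku: "adj k ** k = mat 1" using k Lu by (auto simp: unitary_group_def)
  have "adj A ** A = P ** (adj k ** k) ** P"
    unfolding A_eq M_def[symmetric] P_def[symmetric] adj_mult hP by (simp add: matrix_mul_assoc)
  hence sq: "P ** P = adj A ** A" by (simp add: ku)
  define F where "F = mexp ((1/2) *\<^sub>R M)"
  have hF: "adj F = F" by (simp add: F_def adj_mexp adj_scaleR hM)
  have "F ** F = mexp ((1/2) *\<^sub>R M + (1/2) *\<^sub>R M)" unfolding F_def by (rule mexp_add_same)
  also have "(1/2) *\<^sub>R M + (1/2) *\<^sub>R M = M" by (simp add: scaleR_add_left[symmetric])
  finally have FF: "F ** F = P" by (simp add: P_def)
  have "psd P" using herm_square_psd[OF hF] FF by simp
  moreover have "P \<in> complexification L"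
  proof -
    have e: "P = mat 1 ** mexp (csmul \<i> X)" by (simp add: P_def M_def)
    show ?thesis unfolding complexification_def mem_Collect_eq
      by (intro exI[of _ "mat 1"] exI[of _ X]) (simp add: e L1 X)
  qed
  ultimately show ?thesis using sq by blast
qed

lemma frob_sq: "(norm (M::'n::finite cmat))^2 = (\<Sum>i\<in>UNIV. \<Sum>j\<in>UNIV. (cmod (M $ i $ j))^2)"
  unfolding norm_vec_def L2_set_def by (simp add: sum_nonneg)

lemma adjM_diag: "(adj M ** (M::'n::finite cmat)) $ j $ j = of_real (\<Sum>i\<in>UNIV. (cmod (M $ i $ j))^2)"
proof -
  have "(adj M ** M) $ j $ j = (\<Sum>i\<in>UNIV. cnj (M $ i $ j) * M $ i $ j)"
    by (simp add: matrix_matrix_mult_def)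
  also have "\<dots> = of_real (\<Sum>i\<in>UNIV. (cmod (M $ i $ j))^2)"
    unfolding of_real_sum by (rule sum.cong) (auto simp: complex_norm_square[symmetric] mult.commute)
  finally show ?thesis .
qed

lemma herm_norm_eq:
  assumes "adj P = P" "P ** P = adj A ** (A::'n::finite cmat)"
  shows "norm P = norm A"
proof -
  have "(norm P)^2 = (\<Sum>j\<in>UNIV. \<Sum>i\<in>UNIV. (cmod (P $ i $ j))^2)"
    unfolding frob_sq by (rule sum.swap)
  also have "\<dots> = (\<Sum>j\<in>UNIV. Re ((adj P ** P) $ j $ j))" by (simp add: adjM_diag)
  also have "\<dots> = (\<Sum>j\<in>UNIV. Re ((adj A ** A) $ j $ j))" using assms by simp
  also have "\<dots> = (\<Sum>j\<in>UNIV. \<Sum>i\<in>UNIV. (cmod (A $ i $ j))^2)" by (simp add: adjM_diag)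
  also have "\<dots> = (norm A)^2" unfolding frob_sq by (rule sum.swap)
  finally show ?thesis by (simp add: power2_eq_iff_nonneg)
qed

lemma tendsto_mm:
  assumes "(f \<longlongrightarrow> a) F" "(g \<longlongrightarrow> b) F"
  shows "((\<lambda>n. f n ** g n) \<longlongrightarrow> a ** (b::'n::finite cmat)) F"
proof (rule vec_tendstoI, rule vec_tendstoI)
  fix i j
  show "((\<lambda>n. (f n ** g n) $ i $ j) \<longlongrightarrow> (a ** b) $ i $ j) F"
    unfolding matrix_matrix_mult_def vec_lambda_beta
    by (intro tendsto_sum tendsto_mult tendsto_vec_nth assms)
qed

lemma tendsto_quad:
  assumes "(f \<longlongrightarrow> a) F"
  shows "((\<lambda>n. Re (ip x (f n *v x))) \<longlongrightarrow> Re (ip x (a *v (x::complex^'n::finite)))) F"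
  unfolding ip_def matrix_vector_mult_def vec_lambda_beta
  by (intro tendsto_Re tendsto_sum tendsto_mult tendsto_const tendsto_vec_nth assms)

lemma closure_sqrt:
  assumes HS: "\<And>A. A \<in> H \<Longrightarrow> \<exists>P\<in>H. psd P \<and> P ** P = adj A ** A"
    and A: "A \<in> closure (H::'n::finite cmat set)"
  shows "\<exists>P\<in>closure H. psd P \<and> P ** P = adj A ** A"
proof -
  obtain As where As: "\<And>n. As n \<in> H" and lim: "As \<longlonglongrightarrow> A"
    using A closure_sequential by blast
  have "\<forall>n. \<exists>P. P \<in> H \<and> psd P \<and> P ** P = adj (As n) ** As n" using HS As by blast
  then obtain Ps where Ps0: "\<forall>n. Ps n \<in> H \<and> psd (Ps n) \<and> Ps n ** Ps n = adj (As n) ** As n"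
    using choice[of "\<lambda>n P. P \<in> H \<and> psd P \<and> P ** P = adj (As n) ** As n"] by blast
  hence Ps: "\<And>n. Ps n \<in> H" "\<And>n. psd (Ps n)" "\<And>n. Ps n ** Ps n = adj (As n) ** As n" by auto
  have nrm: "norm (Ps n) = norm (As n)" for n
  proof -
    have "adj (Ps n) = Ps n" using Ps(2) by (simp add: psd_iff)
    thus ?thesis using herm_norm_eq Ps(3) by blast
  qed
  have "bounded (range As)" using lim convergent_imp_bounded by blast
  then obtain K where K: "\<And>n. norm (As n) \<le> K" unfolding bounded_iff by blast
  have "bounded (range Ps)" unfolding bounded_iff using K nrm by auto
  then obtain l r where r: "strict_mono r" and lr: "(Ps \<circ> r) \<longlonglongrightarrow> l"
    using bounded_imp_convergent_subsequence by blast
  have lr': "(\<lambda>n. Ps (r n)) \<longlonglongrightarrow> l" using lr by (simp add: o_def)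
  have limA: "(\<lambda>n. As (r n)) \<longlonglongrightarrow> A" using LIMSEQ_subseq_LIMSEQ[OF lim r] by (simp add: o_def)
  have inH: "l \<in> closure H"
    unfolding closure_sequential by (intro exI[of _ "\<lambda>n. Ps (r n)"] conjI allI Ps(1) lr')
  have "(\<lambda>n. adj (Ps (r n))) \<longlonglongrightarrow> adj l" by (rule bounded_linear.tendsto[OF bl_adj lr'])
  moreover have "(\<lambda>n. adj (Ps (r n))) = (\<lambda>n. Ps (r n))"
    using Ps(2) by (simp add: psd_iff)
  ultimately have "(\<lambda>n. Ps (r n)) \<longlonglongrightarrow> adj l" by (rule back_subst)
  hence hl: "adj l = l" by (rule LIMSEQ_unique[OF lr', symmetric])
  have "(\<lambda>n. Ps (r n) ** Ps (r n)) \<longlonglongrightarrow> l ** l" by (rule tendsto_mm[OF lr' lr'])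
  moreover have "(\<lambda>n. adj (As (r n)) ** As (r n)) \<longlonglongrightarrow> adj A ** A"
    by (rule tendsto_mm[OF bounded_linear.tendsto[OF bl_adj limA] limA])
  ultimately have sq: "l ** l = adj A ** A" unfolding Ps(3) by (rule LIMSEQ_unique)
  have "0 \<le> Re (ip x (l *v x))" for x
  proof (rule LIMSEQ_le_const[OF tendsto_quad[OF lr']])
    show "\<exists>N. \<forall>n\<ge>N. 0 \<le> Re (ip x (Ps (r n) *v x))" using Ps(2) by (auto simp: psd_iff)
  qed
  hence "psd l" using hl by (simp add: psd_iff)
  thus ?thesis using inH sq by blast
qed




theorem lemmaB2:
  fixes L H S :: "'n::finite cmat set"
  assumes L_compact: "compact L"
      and L_unitary: "L \<subseteq> unitary_group"
      and L_one: "mat 1 \<in> L"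
      and L_mult: "\<And>a b. a \<in> L \<Longrightarrow> b \<in> L \<Longrightarrow> a ** b \<in> L"
      and L_inv: "\<And>a. a \<in> L \<Longrightarrow> adj a \<in> L"
      and H_def: "H = complexification L"
      and L_eq: "L = H \<inter> unitary_group"
      and S_def: "S = closure H"
      and S_normal: "normal_variety S"
      and S_monoid: "mat 1 \<in> S" "\<And>a b. a \<in> S \<Longrightarrow> b \<in> S \<Longrightarrow> a ** b \<in> S"
  shows "\<forall>\<xi> \<in> muL L ` S. \<forall>B \<in> mu ` S. dstar L B = \<xi> \<longrightarrow>
           sec B \<in> S \<and> muL L (sec B) = \<xi>"
proof (intro ballI impI)
  fix \<xi> B assume B_in: "B \<in> mu ` S" and eq: "dstar L B = \<xi>"
  then obtain A where A: "A \<in> S" and B: "B = mu A" by auto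
  have HS: "\<exists>P\<in>H. psd P \<and> P ** P = adj A' ** A'" if "A' \<in> H" for A'
    using H_sqrt[OF L_unitary L_one] that H_def by simp
  have "\<exists>P\<in>closure H. psd P \<and> P ** P = adj A ** A"
    using closure_sqrt[OF HS] A S_def by simp
  then obtain P where P: "P \<in> closure H" "psd P" "P ** P = adj A ** A" by blast
  have c: "csmul (- \<i>) B = adj A ** A" by (simp add: B mu_def csmul_def vec_eq_iff)
  have sec: "sec B = P" unfolding sec_def msqrt_def c
  proof (rule the_equality)
    show "psd P \<and> P ** P = adj A ** A" using P by simp
    fix Q assume "psd Q \<and> Q ** Q = adj A ** A"
    thus "Q = P" using psd_sqrt_unique[of Q P] P by simp
  qed
  have hP: "adj P = P" using P(2) by (simp add: psd_iff)
  have "mu P = B" by (simp add: mu_def hP P(3) B)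
  hence "muL L P = \<xi>" by (simp add: muL_def eq)
  thus "sec B \<in> S \<and> muL L (sec B) = \<xi>" using sec P(1) S_def by simp
qed


end
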